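(* Let $\widetilde{\mathfrak A}$ and $\widetilde\Omega$ be open subsets of $\mathbb R^d$, with $\widetilde{\mathfrak A}$ connected and $\widetilde\Omega$ convex, and let $F:\widetilde{\mathfrak A}\to\widetilde\Omega$ be a $\mathcal C^2$ homeomorphism with $\det F'\neq0$ on $\widetilde{\mathfrak A}$. Let $L_*,L_0\in\widetilde\Omega$ and let $A_*\in\widetilde{\mathfrak A}$ be the unique solution of $F(A_* )=L_*$. Then for every $\varepsilon>0$ there exist $\sigma_0>0$ and an integer $N_0\ge1$ such that for every integer $n>N_0$ and every $\sigma\in(0,\sigma_0)$, the continuation scheme described in the context with parameters $n$ and $\sigma$ is well defined, the Newton method terminates at each of its $n$ steps, and the final output satisfies $|A^{(n)}_{fin}-A_*|<\varepsilon$.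
   Context: Newton method for solving $F(A)=\widehat L$ with tolerance $\sigma>0$ and starting point $A_{st}$: set $A^{(0)}=A_{st}$ and $A^{(j+1)}=A^{(j)}-F'(A^{(j)})^{-1}\big(F(A^{(j)})-\widehat L\big)$, $j\ge0$; the process stops at the first $j$ with $|F(A^{(j)})-\widehat L|<\sigma$, and $A_{fin}:=A^{(j)}$ is its output. Continuation scheme with parameters $n\ge1$ and $\sigma>0$: let $A_0=F^{-1}(L_0)$ and $L_k=((n-k)L_0+kL_* )/n$ for $k=0,\dots,n$. For $k=1,\dots,n$, run the Newton method for $F(A)=L_k$ with tolerance $\sigma$ and starting point $A^{(k)}_{st}=A^{(k-1)}_{fin}$ (with $A^{(0)}_{fin}:=A_0$), and let $A^{(k)}_{fin}$ be its output. The final output is $A^{(n)}_{fin}$. *)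

theory Defs
  imports "HOL-Analysis.Analysis"
begin

primrec newton_iter ::
  "(real^'d \<Rightarrow> real^'d) \<Rightarrow> (real^'d \<Rightarrow> real^'d^'d) \<Rightarrow> real^'d \<Rightarrow> real^'d \<Rightarrow> nat \<Rightarrow> real^'d"
where
  "newton_iter F J Lh a0 0 = a0"
| "newton_iter F J Lh a0 (Suc j) =
     newton_iter F J Lh a0 j - matrix_inv (J (newton_iter F J Lh a0 j)) *v (F (newton_iter F J Lh a0 j) - Lh)"

definition newton_terminates ::
  "(real^'d \<Rightarrow> real^'d) \<Rightarrow> (real^'d \<Rightarrow> real^'d^'d) \<Rightarrow> (real^'d) set \<Rightarrow> real^'d \<Rightarrow> real \<Rightarrow> real^'d \<Rightarrow> bool"
where
  "newton_terminates F J Adom Lh \<sigma> a0 \<longleftrightarrow>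
     (\<exists>j. (\<forall>i\<le>j. newton_iter F J Lh a0 i \<in> Adom) \<and> norm (F (newton_iter F J Lh a0 j) - Lh) < \<sigma>)"

definition newton_output ::
  "(real^'d \<Rightarrow> real^'d) \<Rightarrow> (real^'d \<Rightarrow> real^'d^'d) \<Rightarrow> real^'d \<Rightarrow> real \<Rightarrow> real^'d \<Rightarrow> real^'d"
where
  "newton_output F J Lh \<sigma> a0 =
     newton_iter F J Lh a0 (LEAST j. norm (F (newton_iter F J Lh a0 j) - Lh) < \<sigma>)"

definition cont_target :: "nat \<Rightarrow> real^'d \<Rightarrow> real^'d \<Rightarrow> nat \<Rightarrow> real^'d" where
  "cont_target n L0 Lstar k = (1 / real n) *\<^sub>R (real (n - k) *\<^sub>R L0 + real k *\<^sub>R Lstar)"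

primrec cont_fin ::
  "(real^'d \<Rightarrow> real^'d) \<Rightarrow> (real^'d \<Rightarrow> real^'d^'d) \<Rightarrow> (real^'d) set \<Rightarrow> real^'d \<Rightarrow> real^'d
    \<Rightarrow> nat \<Rightarrow> real \<Rightarrow> nat \<Rightarrow> real^'d"
where
  "cont_fin F J Adom L0 Lstar n \<sigma> 0 = inv_into Adom F L0"
| "cont_fin F J Adom L0 Lstar n \<sigma> (Suc k) =
     newton_output F J (cont_target n L0 Lstar (Suc k)) \<sigma> (cont_fin F J Adom L0 Lstar n \<sigma> k)"

definition cont_well_defined ::
  "(real^'d \<Rightarrow> real^'d) \<Rightarrow> (real^'d \<Rightarrow> real^'d^'d) \<Rightarrow> (real^'d) set \<Rightarrow> real^'d \<Rightarrow> real^'d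
    \<Rightarrow> nat \<Rightarrow> real \<Rightarrow> bool"
where
  "cont_well_defined F J Adom L0 Lstar n \<sigma> \<longleftrightarrow>
     (\<forall>k\<in>{1..n}. newton_terminates F J Adom (cont_target n L0 Lstar k) \<sigma>
                   (cont_fin F J Adom L0 Lstar n \<sigma> (k - 1)))"

end

theory Submission
  imports Defs
begin

lemma onorm_mat_le:
  fixes A :: "real^'n^'m"
  shows "onorm ((*v) A) \<le> real CARD('m) * real CARD('n) * norm A"
proof (rule onorm_le_matrix_component)
  fix i j
  have "\<bar>A $ i $ j\<bar> \<le> norm (A $ i)" by (rule component_le_norm_cart)
  also have "\<dots> \<le> norm A" by (rule Finite_Cartesian_Product.norm_nth_le)
  finally show "\<bar>A $ i $ j\<bar> \<le> norm A" .
qed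

lemma mat_inv_right:
  fixes A :: "real^'n^'n"
  assumes "det A \<noteq> 0"
  shows "A *v (matrix_inv A *v v) = v"
proof -
  have "invertible A" using assms invertible_det_nz by blast
  then have "A ** matrix_inv A = mat 1 \<and> matrix_inv A ** A = mat 1"
    unfolding invertible_def matrix_inv_def by (rule someI_ex)
  then show ?thesis by (simp add: matrix_vector_mul_assoc)
qed

lemma mat_ker:
  fixes A :: "real^'n^'n"
  assumes "det A \<noteq> 0" "A *v h = 0"
  shows "h = 0"
proof -
  have "invertible A" using assms invertible_det_nz by blast
  then have "A ** matrix_inv A = mat 1 \<and> matrix_inv A ** A = mat 1"
    unfolding invertible_def matrix_inv_def by (rule someI_ex)
  then have "h = matrix_inv A *v (A *v h)" by (simp add: matrix_vector_mul_assoc)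
  then show ?thesis using assms by simp
qed

lemma cont_mv:
  fixes F' :: "'a::topological_space \<Rightarrow> real^'n^'m"
  assumes "continuous_on K F'"
  shows "continuous_on (K \<times> T) (\<lambda>z. F' (fst z) *v snd z)"
proof -
  have c1: "continuous_on (K \<times> T) (\<lambda>z. F' (fst z))"
    by (rule continuous_on_compose2[OF assms continuous_on_fst]) auto
  show ?thesis
    unfolding matrix_vector_mult_def
    by (intro continuous_intros continuous_on_component c1)
qed

theorem theorem6p1:
  fixes F :: "real^'d \<Rightarrow> real^'d"
    and F' :: "real^'d \<Rightarrow> real^'d^'d"
    and F'' :: "real^'d \<Rightarrow> ((real^'d) \<Rightarrow>\<^sub>L (real^'d^'d))"
    and Adom \<Omega> :: "(real^'d) set"
    and L0 Lstar Astar :: "real^'d"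
  assumes "open Adom" and "connected Adom"
    and "open \<Omega>" and "convex \<Omega>"
    and homeo: "\<exists>G. homeomorphism Adom \<Omega> F G"
    and deriv1: "\<forall>x\<in>Adom. (F has_derivative (\<lambda>h. F' x *v h)) (at x)"
    and deriv2: "\<forall>x\<in>Adom. (F' has_derivative blinfun_apply (F'' x)) (at x)"
    and cont2: "continuous_on Adom F''"
    and det: "\<forall>x\<in>Adom. det (F' x) \<noteq> 0"
    and "L0 \<in> \<Omega>" and "Lstar \<in> \<Omega>"
    and "Astar \<in> Adom" and "F Astar = Lstar"
  shows "\<forall>\<epsilon>>0. \<exists>\<sigma>0>0. \<exists>N0::nat. N0 \<ge> 1 \<and>
           (\<forall>n>N0. \<forall>\<sigma>. 0 < \<sigma> \<and> \<sigma> < \<sigma>0 \<longrightarrow>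
              cont_well_defined F F' Adom L0 Lstar n \<sigma> \<and>
              norm (cont_fin F F' Adom L0 Lstar n \<sigma> n - Astar) < \<epsilon>)"
proof -
  obtain G where hG: "homeomorphism Adom \<Omega> F G" using homeo by blast
  have GF: "\<And>x. x \<in> Adom \<Longrightarrow> G (F x) = x" and FA: "F ` Adom = \<Omega>"
    and FG: "\<And>y. y \<in> \<Omega> \<Longrightarrow> F (G y) = y" and GO: "G ` \<Omega> = Adom"
    and contG: "continuous_on \<Omega> G"
    using hG unfolding homeomorphism_def by auto
  define S where "S = closed_segment L0 Lstar"
  have SO: "S \<subseteq> \<Omega>" unfolding S_def using \<open>convex \<Omega>\<close> \<open>L0 \<in> \<Omega>\<close> \<open>Lstar \<in> \<Omega>\<close>
    by (simp add: convex_contains_segment)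
  have cS: "compact S" unfolding S_def by (rule compact_segment)
  define P where "P = G ` S"
  have cP: "compact P" unfolding P_def
    by (rule compact_continuous_image[OF continuous_on_subset[OF contG SO] cS])
  have PA: "P \<subseteq> Adom" unfolding P_def using SO GO by blast
  have PS: "\<And>a. a \<in> P \<Longrightarrow> F a \<in> S" unfolding P_def using SO FG by auto
  have aP: "G L0 \<in> P" unfolding P_def S_def by simp
  obtain \<delta> where "\<delta> > 0" and hd: "\<forall>x\<in>P. \<forall>y\<in>-Adom. \<delta> \<le> dist x y"
    using separate_compact_closed[OF cP _, of "-Adom"] \<open>open Adom\<close> PA by auto
  define r where "r = \<delta> / 2"
  have "r > 0" using \<open>\<delta>>0\<close> r_def by simp
  define K where "K = (\<lambda>z. fst z + snd z) ` (P \<times> cball (0::real^'d) r)"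
  have cK: "compact K" unfolding K_def
    by (intro compact_continuous_image continuous_intros compact_Times cP compact_cball)
  have ballK: "\<And>a. a \<in> P \<Longrightarrow> cball a r \<subseteq> K"
  proof
    fix a y assume "a \<in> P" "y \<in> cball a r"
    then have "(a, y - a) \<in> P \<times> cball 0 r" by (simp add: dist_norm norm_minus_commute)
    then show "y \<in> K" unfolding K_def by (force intro: image_eqI[where x="(a, y - a)"])
  qed
  have KA: "K \<subseteq> Adom"
  proof
    fix y assume "y \<in> K"
    then obtain a h where "a \<in> P" "norm h \<le> r" "y = a + h" unfolding K_def by auto
    then have "dist a y < \<delta>" using \<open>\<delta>>0\<close> r_def by (simp add: dist_norm)
    then show "y \<in> Adom" using hd \<open>a \<in> P\<close> by force
  qed
  have contF': "continuous_on Adom F'"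
    using deriv2 by (meson continuous_at_imp_continuous_on has_derivative_continuous)
  have contF'K: "continuous_on K F'" using continuous_on_subset[OF contF' KA] .

  have derK: "\<And>x. x \<in> K \<Longrightarrow> (F has_derivative (\<lambda>h. F' x *v h)) (at x)"
    using deriv1 KA by blast
  have KP: "\<And>x. x \<in> P \<Longrightarrow> x \<in> K" using ballK \<open>r>0\<close> by fastforce
  have Kne: "K \<noteq> {}" using KP aP by blast
  obtain u :: "real^'d" where u: "norm u = 1" using vector_choose_size[of 1] by auto
  obtain z0 where z0: "z0 \<in> K \<times> sphere 0 1"
    and z0min: "\<forall>z\<in>K \<times> sphere 0 1. norm (F' (fst z0) *v snd z0) \<le> norm (F' (fst z) *v snd z)"
    using continuous_attains_inf[OF compact_Times[OF cK compact_sphere] _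
        continuous_on_norm[OF cont_mv[OF contF'K]], of 0 1] Kne u
    by (metis (no_types, lifting) Sigma_empty_iff all_not_in_conv dist_0_norm mem_sphere)
  define m where "m = norm (F' (fst z0) *v snd z0)"
  have "m > 0"
  proof -
    have "F' (fst z0) *v snd z0 \<noteq> 0"
      using mat_ker[of "F' (fst z0)" "snd z0"] det KA z0 by force
    then show ?thesis unfolding m_def by simp
  qed
  have mlow: "\<And>y h. y \<in> K \<Longrightarrow> m * norm h \<le> norm (F' y *v h)"
  proof -
    fix y h assume "y \<in> K"
    show "m * norm h \<le> norm (F' y *v h)"
    proof (cases "h = 0")
      case True then show ?thesis by simp
    next
      case False
      have "(y, (1 / norm h) *\<^sub>R h) \<in> K \<times> sphere 0 1" using \<open>y \<in> K\<close> False by simp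
      then have "m \<le> norm (F' y *v ((1 / norm h) *\<^sub>R h))" using z0min m_def by force
      also have "\<dots> = norm (F' y *v h) / norm h" by (simp add: matrix_vector_mult_scaleR)
      finally show ?thesis using False by (simp add: field_simps)
    qed
  qed
  define c where "c = real CARD('d) * real CARD('d)"
  have "c > 0" unfolding c_def by simp
  have onc: "\<And>A. onorm ((*v) (A::real^'d^'d)) \<le> c * norm A" unfolding c_def by (rule onorm_mat_le)
  obtain d where "d > 0" and hdu: "\<forall>x\<in>K. \<forall>x'\<in>K. dist x' x < d \<longrightarrow> dist (F' x') (F' x) < m / (2 * c)"
    using compact_uniformly_continuous[OF contF'K cK] \<open>m>0\<close> \<open>c>0\<close>
    unfolding uniformly_continuous_on_def by (metis divide_pos_pos mult_pos_pos zero_less_numeral)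
  define \<rho> where "\<rho> = min r (d / 3)"
  have "\<rho> > 0" "\<rho> \<le> r" using \<open>r>0\<close> \<open>d>0\<close> \<rho>_def by auto
  have ballK2: "\<And>a. a \<in> P \<Longrightarrow> cball a \<rho> \<subseteq> K" using ballK \<open>\<rho> \<le> r\<close> by fastforce
  have R: "\<And>a x z. a \<in> P \<Longrightarrow> x \<in> cball a \<rho> \<Longrightarrow> z \<in> cball a \<rho> \<Longrightarrow>
      norm (F x - F a - F' z *v (x - a)) \<le> norm (x - a) * (m / 2)"
  proof -
    fix a x z assume a: "a \<in> P" and x: "x \<in> cball a \<rho>" and z: "z \<in> cball a \<rho>"
    show "norm (F x - F a - F' z *v (x - a)) \<le> norm (x - a) * (m / 2)"
    proof -
      have "norm (F x - F a - (\<lambda>h. F' z *v h) (x - a)) \<le> norm (x - a) * (m / 2)"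
      proof (rule differentiable_bound_linearization[where S="cball a \<rho>" and f=F and f'="\<lambda>y h. F' y *v h"])
        fix t :: real assume "t \<in> {0..1}"
        then have "t * norm (x - a) \<le> 1 * \<rho>" using x
          by (intro mult_mono) (auto simp: dist_norm norm_minus_commute)
        then show "a + t *\<^sub>R (x - a) \<in> cball a \<rho>" using \<open>t \<in> {0..1}\<close>
          by (simp add: dist_norm)
      next
        fix y assume "y \<in> cball a \<rho>"
        then have "y \<in> K" using ballK2[OF a] by blast
        then show "(F has_derivative (\<lambda>h. F' y *v h)) (at y within cball a \<rho>)"
          by (rule has_derivative_at_withinI[OF derK])
      next
        fix y assume y: "y \<in> cball a \<rho>"
        have "dist y z < d" using y z \<rho>_def \<open>d>0\<close> dist_triangle3[of y z a] by (simp add: dist_commute)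
        then have "dist (F' y) (F' z) < m / (2 * c)" using hdu ballK2[OF a] y z by blast
        then have "c * norm (F' y - F' z) \<le> m / 2" using \<open>c>0\<close> by (simp add: dist_norm field_simps)
        moreover have "(\<lambda>h. F' y *v h) - (\<lambda>h. F' z *v h) = (*v) (F' y - F' z)"
          by (rule ext) (simp add: matrix_vector_mult_diff_rdistrib)
        ultimately show "onorm ((\<lambda>h. F' y *v h) - (\<lambda>h. F' z *v h)) \<le> m / 2" using onc by (metis order_trans)
      next
        show "z \<in> cball a \<rho>" by (rule z)
      qed
      then show ?thesis by simp
    qed
  qed

  have aK: "\<And>a x. a \<in> P \<Longrightarrow> x \<in> cball a \<rho> \<Longrightarrow> x \<in> K" using ballK2 by blast
  have LB: "\<And>a x. a \<in> P \<Longrightarrow> x \<in> cball a \<rho> \<Longrightarrow> norm (x - a) \<le> (2 / m) * norm (F x - F a)"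
  proof -
    fix a x assume a: "a \<in> P" and x: "x \<in> cball a \<rho>"
    have a2: "a \<in> cball a \<rho>" using \<open>\<rho>>0\<close> by simp
    have r: "norm (F x - F a - F' a *v (x - a)) \<le> norm (x - a) * (m / 2)" by (rule R[OF a x a2])
    have "m * norm (x - a) \<le> norm (F' a *v (x - a))" using mlow aK[OF a a2] by blast
    also have "\<dots> \<le> norm (F x - F a) + norm (F x - F a - F' a *v (x - a))"
      by (metis norm_triangle_ineq4 add.commute diff_diff_eq2 diff_self norm_minus_commute
          order_refl norm_diff_triangle_ineq add_diff_cancel_left' diff_add_cancel)
    finally have "m * norm (x - a) \<le> norm (F x - F a) + norm (x - a) * (m / 2)" using r by linarith
    then have "(m/2) * norm (x - a) \<le> norm (F x - F a)" by (simp add: algebra_simps)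
    then show "norm (x - a) \<le> (2 / m) * norm (F x - F a)" using \<open>m>0\<close> by (simp add: field_simps)
  qed
  have UB: "\<And>a x. a \<in> P \<Longrightarrow> x \<in> cball a \<rho> \<Longrightarrow> norm (F x - F a) \<le> (onorm ((*v) (F' a)) + m / 2) * norm (x - a)"
  proof -
    fix a x assume a: "a \<in> P" and x: "x \<in> cball a \<rho>"
    have a2: "a \<in> cball a \<rho>" using \<open>\<rho>>0\<close> by simp
    have r: "norm (F x - F a - F' a *v (x - a)) \<le> norm (x - a) * (m / 2)" by (rule R[OF a x a2])
    have o: "norm (F' a *v (x - a)) \<le> onorm ((*v) (F' a)) * norm (x - a)"
      by (rule onorm[OF matrix_vector_mul_bounded_linear])
    have "norm (F x - F a) \<le> norm (F' a *v (x - a)) + norm (F x - F a - F' a *v (x - a))"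
      by (metis add_diff_cancel_left' diff_add_cancel norm_triangle_ineq add.commute)
    then show "norm (F x - F a) \<le> (onorm ((*v) (F' a)) + m / 2) * norm (x - a)"
      using r o by (simp add: algebra_simps)
  qed
  have C: "\<And>a x. a \<in> P \<Longrightarrow> x \<in> cball a \<rho> \<Longrightarrow>
      norm (x - matrix_inv (F' x) *v (F x - F a) - a) \<le> norm (x - a) / 2"
  proof -
    fix a x assume a: "a \<in> P" and x: "x \<in> cball a \<rho>"
    define w where "w = x - matrix_inv (F' x) *v (F x - F a) - a"
    have dx: "det (F' x) \<noteq> 0" using det KA aK[OF a x] by blast
    have "F' x *v w = F' x *v (x - a) - (F x - F a)"
      unfolding w_def using mat_inv_right[OF dx]
      by (simp add: matrix_vector_mult_diff_distrib)
    then have "norm (F' x *v w) = norm (F x - F a - F' x *v (x - a))"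
      by (simp add: norm_minus_commute)
    also have "\<dots> \<le> norm (x - a) * (m / 2)" by (rule R[OF a x x])
    finally have "m * norm w \<le> norm (x - a) * (m / 2)" using mlow[OF aK[OF a x], of w] by linarith
    then show "norm (x - matrix_inv (F' x) *v (F x - F a) - a) \<le> norm (x - a) / 2"
      using \<open>m>0\<close> unfolding w_def[symmetric] by (simp add: field_simps)
  qed

  have N: "\<And>a x0 j. a \<in> P \<Longrightarrow> x0 \<in> cball a \<rho> \<Longrightarrow>
      newton_iter F F' (F a) x0 j \<in> cball a \<rho> \<and> norm (newton_iter F F' (F a) x0 j - a) \<le> (1/2)^j * \<rho>"
  proof -
    fix a x0 j assume a: "a \<in> P" and x0: "x0 \<in> cball a \<rho>"
    show "newton_iter F F' (F a) x0 j \<in> cball a \<rho> \<and> norm (newton_iter F F' (F a) x0 j - a) \<le> (1/2)^j * \<rho>"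
    proof (induction j)
      case 0
      then show ?case using x0 by (simp add: dist_norm norm_minus_commute)
    next
      case (Suc j)
      define y where "y = newton_iter F F' (F a) x0 j"
      have y: "y \<in> cball a \<rho>" "norm (y - a) \<le> (1/2)^j * \<rho>" using Suc y_def by auto
      have "norm (newton_iter F F' (F a) x0 (Suc j) - a) \<le> norm (y - a) / 2"
        using C[OF a y(1)] by (simp add: y_def)
      also have "\<dots> \<le> (1/2)^(Suc j) * \<rho>" using y(2) by simp
      finally have b: "norm (newton_iter F F' (F a) x0 (Suc j) - a) \<le> (1/2)^(Suc j) * \<rho>" .
      moreover have "(1/2::real)^(Suc j) \<le> 1" by (rule power_le_one) auto
      then have "(1/2::real)^(Suc j) * \<rho> \<le> \<rho>" using \<open>\<rho>>0\<close>
        using mult_right_mono by fastforce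
      ultimately show ?case by (simp add: dist_norm norm_minus_commute)
    qed
  qed
  have T: "\<And>a x0 \<sigma>. a \<in> P \<Longrightarrow> x0 \<in> cball a \<rho> \<Longrightarrow> \<sigma> > 0 \<Longrightarrow>
      \<exists>j. norm (F (newton_iter F F' (F a) x0 j) - F a) < \<sigma>"
  proof -
    fix a x0 and \<sigma> :: real assume a: "a \<in> P" and x0: "x0 \<in> cball a \<rho>" and "\<sigma> > 0"
    define B where "B = onorm ((*v) (F' a)) + m / 2"
    have "onorm ((*v) (F' a)) \<ge> 0" by (rule onorm_pos_le[OF matrix_vector_mul_bounded_linear])
    then have "B > 0" using \<open>m>0\<close> B_def by simp
    obtain j where j: "(1/2::real)^j < \<sigma> / (B * \<rho>)"
      using real_arch_pow_inv[of "\<sigma> / (B * \<rho>)" "1/2"] \<open>\<sigma>>0\<close> \<open>B>0\<close> \<open>\<rho>>0\<close> by auto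
    have "norm (F (newton_iter F F' (F a) x0 j) - F a) \<le> B * norm (newton_iter F F' (F a) x0 j - a)"
      using UB[OF a] N[OF a x0] B_def by blast
    also have "\<dots> \<le> B * ((1/2)^j * \<rho>)" using N[OF a x0] \<open>B>0\<close> by (simp add: mult_left_mono)
    also have "\<dots> < \<sigma>" using j \<open>B>0\<close> \<open>\<rho>>0\<close> by (simp add: field_simps)
    finally show "\<exists>j. norm (F (newton_iter F F' (F a) x0 j) - F a) < \<sigma>" by blast
  qed
  have NR: "\<And>a x0 \<sigma>. a \<in> P \<Longrightarrow> x0 \<in> cball a \<rho> \<Longrightarrow> \<sigma> > 0 \<Longrightarrow>
      newton_terminates F F' Adom (F a) \<sigma> x0 \<and> newton_output F F' (F a) \<sigma> x0 \<in> cball a \<rho>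
      \<and> norm (F (newton_output F F' (F a) \<sigma> x0) - F a) < \<sigma>"
  proof -
    fix a x0 and \<sigma> :: real assume a: "a \<in> P" and x0: "x0 \<in> cball a \<rho>" and "\<sigma> > 0"
    obtain j where j: "norm (F (newton_iter F F' (F a) x0 j) - F a) < \<sigma>" using T[OF a x0 \<open>\<sigma>>0\<close>] by blast
    have inA: "\<And>i. newton_iter F F' (F a) x0 i \<in> Adom" using N[OF a x0] aK[OF a] KA by blast
    have "newton_terminates F F' Adom (F a) \<sigma> x0"
      unfolding newton_terminates_def using j inA by blast
    moreover have "norm (F (newton_output F F' (F a) \<sigma> x0) - F a) < \<sigma>"
      unfolding newton_output_def using j by (rule LeastI)
    moreover have "newton_output F F' (F a) \<sigma> x0 \<in> cball a \<rho>"
      unfolding newton_output_def using N[OF a x0] by blast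
    ultimately show "newton_terminates F F' Adom (F a) \<sigma> x0 \<and> newton_output F F' (F a) \<sigma> x0 \<in> cball a \<rho>
      \<and> norm (F (newton_output F F' (F a) \<sigma> x0) - F a) < \<sigma>" by blast
  qed

  have A0: "inv_into Adom F L0 = G L0"
  proof -
    have "inj_on F Adom" using GF by (metis inj_on_inverseI)
    moreover have "G L0 \<in> Adom" using GO \<open>L0 \<in> \<Omega>\<close> by blast
    ultimately show ?thesis using inv_into_f_f FG[OF \<open>L0 \<in> \<Omega>\<close>] by metis
  qed
  have Astar: "G Lstar = Astar" using GF \<open>Astar \<in> Adom\<close> \<open>F Astar = Lstar\<close> by blast
  show ?thesis
  proof (intro allI impI)
    fix \<epsilon> :: real assume "\<epsilon> > 0"
    obtain dG where "dG > 0" and hdG: "\<forall>y\<in>S. \<forall>y'\<in>S. dist y' y < dG \<longrightarrow> dist (G y') (G y) < \<rho> / 2"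
      using compact_uniformly_continuous[OF continuous_on_subset[OF contG SO] cS] \<open>\<rho>>0\<close>
      unfolding uniformly_continuous_on_def by (metis half_gt_zero)
    define \<sigma>0 where "\<sigma>0 = min (m * \<rho> / 4) (m * \<epsilon> / 2)"
    define N0 where "N0 = nat \<lceil>norm (Lstar - L0) / dG\<rceil> + 1"
    have "\<sigma>0 > 0" using \<sigma>0_def \<open>m>0\<close> \<open>\<rho>>0\<close> \<open>\<epsilon>>0\<close> by simp
    moreover have "N0 \<ge> 1" unfolding N0_def by simp
    moreover have "\<forall>n>N0. \<forall>\<sigma>. 0 < \<sigma> \<and> \<sigma> < \<sigma>0 \<longrightarrow>
              cont_well_defined F F' Adom L0 Lstar n \<sigma> \<and>
              norm (cont_fin F F' Adom L0 Lstar n \<sigma> n - Astar) < \<epsilon>"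
    proof (intro allI impI)
      fix n :: nat and \<sigma> :: real assume "n > N0" and \<sigma>: "0 < \<sigma> \<and> \<sigma> < \<sigma>0"
      show "cont_well_defined F F' Adom L0 Lstar n \<sigma> \<and>
              norm (cont_fin F F' Adom L0 Lstar n \<sigma> n - Astar) < \<epsilon>"
      proof -
      have "n > 0" using \<open>n > N0\<close> by simp
      define Lk where "Lk = cont_target n L0 Lstar"
      have Lform: "\<And>k. k \<le> n \<Longrightarrow> Lk k = (1 - real k / real n) *\<^sub>R L0 + (real k / real n) *\<^sub>R Lstar"
      proof -
        fix k assume "k \<le> n"
        have "Lk k = (real (n - k) / real n) *\<^sub>R L0 + (real k / real n) *\<^sub>R Lstar"
          unfolding Lk_def cont_target_def by (simp add: scaleR_add_right)
        also have "real (n - k) / real n = 1 - real k / real n"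
          using \<open>k \<le> n\<close> \<open>n > 0\<close> by (simp add: of_nat_diff field_simps)
        finally show "Lk k = (1 - real k / real n) *\<^sub>R L0 + (real k / real n) *\<^sub>R Lstar" .
      qed
      have LS: "\<And>k. k \<le> n \<Longrightarrow> Lk k \<in> S"
      proof -
        fix k assume k: "k \<le> n"
        have "0 \<le> real k / real n" "real k / real n \<le> 1" using k \<open>n>0\<close> by auto
        then show "Lk k \<in> S" unfolding S_def in_segment using Lform[OF k] by blast
      qed
      have L0: "Lk 0 = L0" using Lform[of 0] by simp
      have Ln: "Lk n = Lstar" using Lform[of n] \<open>n>0\<close> by simp
      have Ldiff: "\<And>k. Suc k \<le> n \<Longrightarrow> dist (Lk (Suc k)) (Lk k) < dG"
      proof -
        fix k assume k: "Suc k \<le> n"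
        have kk: "k \<le> n" using k by simp
        have e1: "Lk (Suc k) - Lk k = ((1 - real (Suc k) / real n) - (1 - real k / real n)) *\<^sub>R L0
             + (real (Suc k) / real n - real k / real n) *\<^sub>R Lstar"
          unfolding Lform[OF k] Lform[OF kk] by (simp add: scaleR_diff_left algebra_simps)
        have e2: "(1 - real (Suc k) / real n) - (1 - real k / real n) = - (1 / real n)"
          "real (Suc k) / real n - real k / real n = 1 / real n"
          using \<open>n>0\<close> by (auto simp: field_simps)
        have "Lk (Suc k) - Lk k = (1 / real n) *\<^sub>R (Lstar - L0)"
          unfolding e1 e2 by (simp add: scaleR_diff_right)
        then have "dist (Lk (Suc k)) (Lk k) = norm (Lstar - L0) / real n"
          by (simp add: dist_norm)
        moreover have "norm (Lstar - L0) / dG < real n"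
        proof -
          have "norm (Lstar - L0) / dG \<le> real (nat \<lceil>norm (Lstar - L0) / dG\<rceil>)" by linarith
          also have "\<dots> < real N0" unfolding N0_def by simp
          also have "\<dots> < real n" using \<open>n > N0\<close> by simp
          finally show ?thesis .
        qed
        ultimately show "dist (Lk (Suc k)) (Lk k) < dG" using \<open>dG>0\<close> \<open>n>0\<close>
          by (simp add: divide_less_eq mult.commute pos_divide_less_eq)
      qed
      define a where "a k = G (Lk k)" for k
      have aP: "\<And>k. k \<le> n \<Longrightarrow> a k \<in> P" unfolding a_def P_def using LS by blast
      have Fa: "\<And>k. k \<le> n \<Longrightarrow> F (a k) = Lk k" unfolding a_def using LS SO FG by blast
      have adist: "\<And>k. Suc k \<le> n \<Longrightarrow> dist (a (Suc k)) (a k) < \<rho> / 2"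
        unfolding a_def using hdG LS Ldiff by (meson Suc_leD)
      define x where "x k = cont_fin F F' Adom L0 Lstar n \<sigma> k" for k
      have xS: "\<And>k. x (Suc k) = newton_output F F' (Lk (Suc k)) \<sigma> (x k)"
        unfolding x_def Lk_def by simp
      have b1: "(2 / m) * \<sigma> < \<rho> / 2" and b2: "(2 / m) * \<sigma> < \<epsilon>"
        using \<sigma> \<open>m>0\<close> \<sigma>0_def by (auto simp: field_simps)
      have Inv: "\<And>k. k \<le> n \<Longrightarrow> norm (x k - a k) \<le> (2 / m) * \<sigma>"
      proof -
        fix k show "k \<le> n \<Longrightarrow> norm (x k - a k) \<le> (2 / m) * \<sigma>"
        proof (induction k)
          case 0
          have "x 0 = a 0" unfolding x_def a_def using A0 L0 by simp
          then show ?case using \<sigma> \<open>m>0\<close> by simp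
        next
          case (Suc k)
          have in1: "x k \<in> cball (a (Suc k)) \<rho>"
          proof -
            have "dist (a (Suc k)) (x k) \<le> dist (a (Suc k)) (a k) + dist (a k) (x k)"
              by (rule dist_triangle)
            moreover have "dist (a k) (x k) \<le> (2 / m) * \<sigma>" using Suc by (simp add: dist_norm norm_minus_commute)
            ultimately show ?thesis using adist[OF Suc.prems] b1 by simp
          qed
          have nr: "newton_output F F' (F (a (Suc k))) \<sigma> (x k) \<in> cball (a (Suc k)) \<rho> \<and>
              norm (F (newton_output F F' (F (a (Suc k))) \<sigma> (x k)) - F (a (Suc k))) < \<sigma>"
            using NR[OF aP[OF Suc.prems] in1] \<sigma> by blast
          have "x (Suc k) = newton_output F F' (F (a (Suc k))) \<sigma> (x k)"
            using xS Fa[OF Suc.prems] by simp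
          then show ?case using LB[OF aP[OF Suc.prems], of "x (Suc k)"] nr \<open>m>0\<close>
            by (smt (verit, ccfv_SIG) divide_pos_pos mult_left_mono)
        qed
      qed
      have in1: "\<And>k. Suc k \<le> n \<Longrightarrow> x k \<in> cball (a (Suc k)) \<rho>"
      proof -
        fix k assume k: "Suc k \<le> n"
        have "dist (a (Suc k)) (x k) \<le> dist (a (Suc k)) (a k) + dist (a k) (x k)"
          by (rule dist_triangle)
        moreover have "dist (a k) (x k) \<le> (2 / m) * \<sigma>" using Inv[of k] k by (simp add: dist_norm norm_minus_commute)
        ultimately show "x k \<in> cball (a (Suc k)) \<rho>" using adist[OF k] b1 by simp
      qed
      have wd: "cont_well_defined F F' Adom L0 Lstar n \<sigma>"
        unfolding cont_well_defined_def
      proof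
        fix k assume "k \<in> {1..n}"
        then obtain k' where k': "k = Suc k'" "Suc k' \<le> n" by (cases k) auto
        have "newton_terminates F F' Adom (F (a k)) \<sigma> (x k')"
          using NR[OF aP[OF k'(2)] in1[OF k'(2)]] \<sigma> k'(1) by blast
        then show "newton_terminates F F' Adom (cont_target n L0 Lstar k) \<sigma>
                   (cont_fin F F' Adom L0 Lstar n \<sigma> (k - 1))"
          using Fa[of k] k' unfolding Lk_def x_def by simp
      qed
      have "norm (x n - a n) < \<epsilon>" using Inv[of n] b2 by simp
      moreover have "a n = Astar" unfolding a_def using Ln Astar by simp
      ultimately show "cont_well_defined F F' Adom L0 Lstar n \<sigma> \<and>
              norm (cont_fin F F' Adom L0 Lstar n \<sigma> n - Astar) < \<epsilon>"
        using wd unfolding x_def by simp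
      qed
    qed
    ultimately show "\<exists>\<sigma>0>0. \<exists>N0::nat. N0 \<ge> 1 \<and>
           (\<forall>n>N0. \<forall>\<sigma>. 0 < \<sigma> \<and> \<sigma> < \<sigma>0 \<longrightarrow>
              cont_well_defined F F' Adom L0 Lstar n \<sigma> \<and>
              norm (cont_fin F F' Adom L0 Lstar n \<sigma> n - Astar) < \<epsilon>)" by blast
  qed
qed


end
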